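(* Let $G_i=(V_i,E_i)$ be a graph of minimum degree $\delta_i$, $i\in\{1,2\}$, let $S\subseteq V_1\times V_2$ and let $k$ be an integer. If for some $i\in\{1,2\}$ the projection $P_{V_i}(S)$ is a $k$-oaf set in $G_i$, then $S$ is a $(k-\delta_j)$-oaf set in $G_1\times G_2$, where $j\in\{1,2\}$, $j\neq i$.
   Context: All graphs are finite and simple. For a graph $G=(V,E)$, a set $S\subseteq V$ and $v\in V$, let $\delta_S(v)=|\{u\in S: uv\in E\}|$, $\overline{S}=V\setminus S$, and let $\partial S$ be the set of vertices of $\overline S$ adjacent to at least one vertex of $S$. For an integer $k$, a non-empty set $S\subseteq V$ is an offensive $k$-alliance if $\delta_S(v)\ge \delta_{\overline S}(v)+k$ for every $v\in \partial S$. A set $X\subseteq V$ is an offensive $k$-alliance free set ($k$-oaf set) if no offensive $k$-alliance $S$ satisfies $S\subseteq X$. The Cartesian product $G_1\times G_2$ of $G_1=(V_1,E_1)$, $G_2=(V_2,E_2)$ has vertex set $V_1\times V_2$, with $(a,b)$ adjacent to $(c,d)$ iff either $a=c$ and $bd\in E_2$, or $b=d$ and $ac\in E_1$. For $A\subseteq V_1\times V_2$, $P_{V_i}(A)$ denotes the projection of $A$ onto $V_i$. *)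

theory Defs
  imports Main
begin

definition simple_graph :: "'a set \<Rightarrow> 'a set set \<Rightarrow> bool" where
  "simple_graph V E \<longleftrightarrow> finite V \<and>
     (\<forall>e\<in>E. \<exists>u v. e = {u, v} \<and> u \<noteq> v \<and> u \<in> V \<and> v \<in> V)"

definition nbr_count :: "'a set set \<Rightarrow> 'a set \<Rightarrow> 'a \<Rightarrow> nat" where
  "nbr_count E S v = card {u \<in> S. {u, v} \<in> E}"

definition degree :: "'a set \<Rightarrow> 'a set set \<Rightarrow> 'a \<Rightarrow> nat" where
  "degree V E v = nbr_count E V v"

definition min_degree :: "'a set \<Rightarrow> 'a set set \<Rightarrow> nat" where
  "min_degree V E = Min (degree V E ` V)"

definition boundary :: "'a set \<Rightarrow> 'a set set \<Rightarrow> 'a set \<Rightarrow> 'a set" where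
  "boundary V E S = {v \<in> V - S. \<exists>u\<in>S. {u, v} \<in> E}"

definition offensive_alliance :: "'a set \<Rightarrow> 'a set set \<Rightarrow> int \<Rightarrow> 'a set \<Rightarrow> bool" where
  "offensive_alliance V E k S \<longleftrightarrow> S \<noteq> {} \<and> S \<subseteq> V \<and>
     (\<forall>v\<in>boundary V E S. int (nbr_count E S v) \<ge> int (nbr_count E (V - S) v) + k)"

definition oaf_set :: "'a set \<Rightarrow> 'a set set \<Rightarrow> int \<Rightarrow> 'a set \<Rightarrow> bool" where
  "oaf_set V E k X \<longleftrightarrow> X \<subseteq> V \<and> (\<forall>S. S \<subseteq> X \<longrightarrow> \<not> offensive_alliance V E k S)"

definition cart_edges :: "'a set \<Rightarrow> 'a set set \<Rightarrow> 'b set \<Rightarrow> 'b set set \<Rightarrow> ('a \<times> 'b) set set" where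
  "cart_edges V1 E1 V2 E2 =
     {{(a, b), (c, d)} | a b c d.
        (a = c \<and> a \<in> V1 \<and> {b, d} \<in> E2) \<or> (b = d \<and> b \<in> V2 \<and> {a, c} \<in> E1)}"

end

theory Submission
  imports Defs
begin

lemma sg_edge:
  assumes "simple_graph V E" "{x,y} \<in> E"
  shows "x \<noteq> y \<and> x \<in> V \<and> y \<in> V"
proof -
  obtain u v where "{x,y} = {u,v}" "u \<noteq> v" "u \<in> V" "v \<in> V"
    using assms unfolding simple_graph_def by blast
  thus ?thesis by (auto simp: doubleton_eq_iff)
qed

lemma cart_adj:
  assumes "simple_graph V1 E1" "simple_graph V2 E2"
  shows "{(x,y),(v,b)} \<in> cart_edges V1 E1 V2 E2 \<longleftrightarrow>
     (x=v \<and> v\<in>V1 \<and> {y,b}\<in>E2) \<or> (y=b \<and> b\<in>V2 \<and> {x,v}\<in>E1)"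
  unfolding cart_edges_def
  by (auto simp: doubleton_eq_iff insert_commute)

lemma dir1:
  fixes V1 :: "'a set" and E1 :: "'a set set" and V2 :: "'b set" and E2 :: "'b set set"
    and S :: "('a \<times> 'b) set" and k :: int
  assumes g1: "simple_graph V1 E1" and g2: "simple_graph V2 E2"
    and SV: "S \<subseteq> V1 \<times> V2" and oaf: "oaf_set V1 E1 k (fst ` S)"
  shows "oaf_set (V1 \<times> V2) (cart_edges V1 E1 V2 E2) (k - int (min_degree V2 E2)) S"
proof -
  let ?cE = "cart_edges V1 E1 V2 E2"
  have fin1: "finite V1" and fin2: "finite V2" using g1 g2 by (auto simp: simple_graph_def)
  have "\<not> offensive_alliance (V1 \<times> V2) ?cE (k - int (min_degree V2 E2)) A" if AS: "A \<subseteq> S" for A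
  proof
    assume oa: "offensive_alliance (V1 \<times> V2) ?cE (k - int (min_degree V2 E2)) A"
    let ?P = "fst ` A"
    have AV: "A \<subseteq> V1 \<times> V2" using AS SV by blast
    have finA: "finite A" using AV fin1 fin2 finite_subset by blast
    have "offensive_alliance V1 E1 k ?P"
      unfolding offensive_alliance_def
    proof (intro conjI ballI)
      show "?P \<noteq> {}" using oa by (auto simp: offensive_alliance_def)
      show "?P \<subseteq> V1" using AV by auto
      fix v assume "v \<in> boundary V1 E1 ?P"
      then obtain u where v: "v \<in> V1" "v \<notin> ?P" "u \<in> ?P" "{u,v} \<in> E1"
        unfolding boundary_def by blast
      then obtain b where ub: "(u,b) \<in> A" by auto
      have b: "b \<in> V2" using ub AV by auto
      have vbA: "(v,b) \<notin> A" using v(2) by force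
      have "{(u,b),(v,b)} \<in> ?cE" using cart_adj[OF g1 g2] b v(4) by auto
      hence bd: "(v,b) \<in> boundary (V1 \<times> V2) ?cE A"
        unfolding boundary_def using v(1) b vbA ub by blast
      have ineq: "int (nbr_count ?cE A (v,b)) \<ge> int (nbr_count ?cE (V1 \<times> V2 - A) (v,b)) + (k - int (min_degree V2 E2))"
        using oa bd unfolding offensive_alliance_def by blast
      have c1: "nbr_count ?cE A (v,b) \<le> nbr_count E1 ?P v"
        unfolding nbr_count_def
      proof (rule card_inj_on_le[where f=fst])
        show "inj_on fst {p \<in> A. {p, (v, b)} \<in> ?cE}"
        proof (rule inj_onI)
          fix p q assume p: "p \<in> {p \<in> A. {p, (v, b)} \<in> ?cE}" and q: "q \<in> {p \<in> A. {p, (v, b)} \<in> ?cE}"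
            and e: "fst p = fst q"
          have "snd p = b"
          proof -
            obtain x y where pxy: "p = (x,y)" by (cases p)
            with p have "(x,y) \<in> A" "{(x,y),(v,b)} \<in> ?cE" by auto
            thus ?thesis using cart_adj[OF g1 g2] v(2) pxy by force
          qed
          moreover have "snd q = b"
          proof -
            obtain x y where pxy: "q = (x,y)" by (cases q)
            with q have "(x,y) \<in> A" "{(x,y),(v,b)} \<in> ?cE" by auto
            thus ?thesis using cart_adj[OF g1 g2] v(2) pxy by force
          qed
          ultimately show "p = q" using e by (simp add: prod_eq_iff)
        qed
        show "fst ` {p \<in> A. {p, (v, b)} \<in> ?cE} \<subseteq> {ua \<in> ?P. {ua, v} \<in> E1}"
        proof
          fix w assume "w \<in> fst ` {p \<in> A. {p, (v, b)} \<in> ?cE}"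
          then obtain y where "(w,y) \<in> A" "{(w,y),(v,b)} \<in> ?cE" by force
          thus "w \<in> {ua \<in> ?P. {ua, v} \<in> E1}" using cart_adj[OF g1 g2] v(2) by force
        qed
        show "finite {ua \<in> ?P. {ua, v} \<in> E1}" using finA by simp
      qed
      let ?Y1 = "(\<lambda>y. (v,y)) ` {y \<in> V2. {y,b} \<in> E2}"
      let ?Y2 = "(\<lambda>x. (x,b)) ` {x \<in> V1 - ?P. {x,v} \<in> E1}"
      have sub: "?Y1 \<union> ?Y2 \<subseteq> {p \<in> V1 \<times> V2 - A. {p, (v,b)} \<in> ?cE}"
      proof
        fix p assume "p \<in> ?Y1 \<union> ?Y2"
        then consider y where "p = (v,y)" "y \<in> V2" "{y,b} \<in> E2"
          | x where "p = (x,b)" "x \<in> V1 - ?P" "{x,v} \<in> E1" by blast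
        thus "p \<in> {p \<in> V1 \<times> V2 - A. {p, (v,b)} \<in> ?cE}"
        proof cases
          case 1 thus ?thesis using cart_adj[OF g1 g2] v(1,2) by force
        next
          case 2 thus ?thesis using cart_adj[OF g1 g2] b by force
        qed
      qed
      have disj: "?Y1 \<inter> ?Y2 = {}"
        using sg_edge[OF g1] by auto
      have "card (?Y1 \<union> ?Y2) = card ?Y1 + card ?Y2"
        by (rule card_Un_disjoint) (use fin1 fin2 disj in auto)
      also have "card ?Y1 = degree V2 E2 b"
        unfolding degree_def nbr_count_def by (subst card_image) (auto simp: inj_on_def)
      also have "card ?Y2 = nbr_count E1 (V1 - ?P) v"
        unfolding nbr_count_def by (subst card_image) (auto simp: inj_on_def)
      finally have cu: "card (?Y1 \<union> ?Y2) = degree V2 E2 b + nbr_count E1 (V1 - ?P) v" .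
      have "finite {p \<in> V1 \<times> V2 - A. {p, (v,b)} \<in> ?cE}" using fin1 fin2 by simp
      from card_mono[OF this sub] cu
      have "degree V2 E2 b + nbr_count E1 (V1 - ?P) v \<le> nbr_count ?cE (V1 \<times> V2 - A) (v,b)"
        unfolding nbr_count_def by simp
      moreover have "min_degree V2 E2 \<le> degree V2 E2 b"
        unfolding min_degree_def using b fin2 by (simp add: Min_le)
      ultimately show "int (nbr_count E1 (V1 - ?P) v) + k \<le> int (nbr_count E1 ?P v)"
        using ineq c1 by linarith
    qed
    moreover have "?P \<subseteq> fst ` S" using AS by auto
    ultimately show False using oaf unfolding oaf_set_def by blast
  qed
  thus ?thesis using SV unfolding oaf_set_def by blast
qed

lemma dir2:
  fixes V1 :: "'a set" and E1 :: "'a set set" and V2 :: "'b set" and E2 :: "'b set set"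
    and S :: "('a \<times> 'b) set" and k :: int
  assumes g1: "simple_graph V1 E1" and g2: "simple_graph V2 E2"
    and SV: "S \<subseteq> V1 \<times> V2" and oaf: "oaf_set V2 E2 k (snd ` S)"
  shows "oaf_set (V1 \<times> V2) (cart_edges V1 E1 V2 E2) (k - int (min_degree V1 E1)) S"
proof -
  let ?cE = "cart_edges V1 E1 V2 E2"
  have fin1: "finite V1" and fin2: "finite V2" using g1 g2 by (auto simp: simple_graph_def)
  have "\<not> offensive_alliance (V1 \<times> V2) ?cE (k - int (min_degree V1 E1)) A" if AS: "A \<subseteq> S" for A
  proof
    assume oa: "offensive_alliance (V1 \<times> V2) ?cE (k - int (min_degree V1 E1)) A"
    let ?P = "snd ` A"
    have AV: "A \<subseteq> V1 \<times> V2" using AS SV by blast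
    have finA: "finite A" using AV fin1 fin2 finite_subset by blast
    have "offensive_alliance V2 E2 k ?P"
      unfolding offensive_alliance_def
    proof (intro conjI ballI)
      show "?P \<noteq> {}" using oa by (auto simp: offensive_alliance_def)
      show "?P \<subseteq> V2" using AV by auto
      fix v assume "v \<in> boundary V2 E2 ?P"
      then obtain u where v: "v \<in> V2" "v \<notin> ?P" "u \<in> ?P" "{u,v} \<in> E2"
        unfolding boundary_def by blast
      then obtain b where ub: "(b,u) \<in> A" by auto
      have b: "b \<in> V1" using ub AV by auto
      have vbA: "(b,v) \<notin> A" using v(2) by force
      have "{(b,u),(b,v)} \<in> ?cE" using cart_adj[OF g1 g2] b v(4) by auto
      hence bd: "(b,v) \<in> boundary (V1 \<times> V2) ?cE A"
        unfolding boundary_def using v(1) b vbA ub by blast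
      have ineq: "int (nbr_count ?cE A (b,v)) \<ge> int (nbr_count ?cE (V1 \<times> V2 - A) (b,v)) + (k - int (min_degree V1 E1))"
        using oa bd unfolding offensive_alliance_def by blast
      have c1: "nbr_count ?cE A (b,v) \<le> nbr_count E2 ?P v"
        unfolding nbr_count_def
      proof (rule card_inj_on_le[where f=snd])
        show "inj_on snd {p \<in> A. {p, (b, v)} \<in> ?cE}"
        proof (rule inj_onI)
          fix p q assume p: "p \<in> {p \<in> A. {p, (b, v)} \<in> ?cE}" and q: "q \<in> {p \<in> A. {p, (b, v)} \<in> ?cE}"
            and e: "snd p = snd q"
          have "fst p = b"
          proof -
            obtain x y where pxy: "p = (x,y)" by (cases p)
            with p have "(x,y) \<in> A" "{(x,y),(b,v)} \<in> ?cE" by auto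
            thus ?thesis using cart_adj[OF g1 g2] v(2) pxy by force
          qed
          moreover have "fst q = b"
          proof -
            obtain x y where pxy: "q = (x,y)" by (cases q)
            with q have "(x,y) \<in> A" "{(x,y),(b,v)} \<in> ?cE" by auto
            thus ?thesis using cart_adj[OF g1 g2] v(2) pxy by force
          qed
          ultimately show "p = q" using e by (simp add: prod_eq_iff)
        qed
        show "snd ` {p \<in> A. {p, (b, v)} \<in> ?cE} \<subseteq> {ua \<in> ?P. {ua, v} \<in> E2}"
        proof
          fix w assume "w \<in> snd ` {p \<in> A. {p, (b, v)} \<in> ?cE}"
          then obtain y where "(y,w) \<in> A" "{(y,w),(b,v)} \<in> ?cE" by force
          thus "w \<in> {ua \<in> ?P. {ua, v} \<in> E2}" using cart_adj[OF g1 g2] v(2) by force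
        qed
        show "finite {ua \<in> ?P. {ua, v} \<in> E2}" using finA by simp
      qed
      let ?Y1 = "(\<lambda>y. (y,v)) ` {y \<in> V1. {y,b} \<in> E1}"
      let ?Y2 = "(\<lambda>x. (b,x)) ` {x \<in> V2 - ?P. {x,v} \<in> E2}"
      have sub: "?Y1 \<union> ?Y2 \<subseteq> {p \<in> V1 \<times> V2 - A. {p, (b,v)} \<in> ?cE}"
      proof
        fix p assume "p \<in> ?Y1 \<union> ?Y2"
        then consider y where "p = (y,v)" "y \<in> V1" "{y,b} \<in> E1"
          | x where "p = (b,x)" "x \<in> V2 - ?P" "{x,v} \<in> E2" by blast
        thus "p \<in> {p \<in> V1 \<times> V2 - A. {p, (b,v)} \<in> ?cE}"
        proof cases
          case 1 thus ?thesis using cart_adj[OF g1 g2] v(1,2) by force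
        next
          case 2 thus ?thesis using cart_adj[OF g1 g2] b by force
        qed
      qed
      have disj: "?Y1 \<inter> ?Y2 = {}"
        using sg_edge[OF g2] by auto
      have "card (?Y1 \<union> ?Y2) = card ?Y1 + card ?Y2"
        by (rule card_Un_disjoint) (use fin1 fin2 disj in auto)
      also have "card ?Y1 = degree V1 E1 b"
        unfolding degree_def nbr_count_def by (subst card_image) (auto simp: inj_on_def)
      also have "card ?Y2 = nbr_count E2 (V2 - ?P) v"
        unfolding nbr_count_def by (subst card_image) (auto simp: inj_on_def)
      finally have cu: "card (?Y1 \<union> ?Y2) = degree V1 E1 b + nbr_count E2 (V2 - ?P) v" .
      have "finite {p \<in> V1 \<times> V2 - A. {p, (b,v)} \<in> ?cE}" using fin1 fin2 by simp
      from card_mono[OF this sub] cu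
      have "degree V1 E1 b + nbr_count E2 (V2 - ?P) v \<le> nbr_count ?cE (V1 \<times> V2 - A) (b,v)"
        unfolding nbr_count_def by simp
      moreover have "min_degree V1 E1 \<le> degree V1 E1 b"
        unfolding min_degree_def using b fin1 by (simp add: Min_le)
      ultimately show "int (nbr_count E2 (V2 - ?P) v) + k \<le> int (nbr_count E2 ?P v)"
        using ineq c1 by linarith
    qed
    moreover have "?P \<subseteq> snd ` S" using AS by auto
    ultimately show False using oaf unfolding oaf_set_def by blast
  qed
  thus ?thesis using SV unfolding oaf_set_def by blast
qed


theorem theorem3:
  fixes V1 :: "'a set" and E1 :: "'a set set" and V2 :: "'b set" and E2 :: "'b set set"
    and S :: "('a \<times> 'b) set" and k :: int
  assumes "simple_graph V1 E1" and "simple_graph V2 E2"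
    and "S \<subseteq> V1 \<times> V2"
  shows "(oaf_set V1 E1 k (fst ` S) \<longrightarrow>
            oaf_set (V1 \<times> V2) (cart_edges V1 E1 V2 E2) (k - int (min_degree V2 E2)) S)
       \<and> (oaf_set V2 E2 k (snd ` S) \<longrightarrow>
            oaf_set (V1 \<times> V2) (cart_edges V1 E1 V2 E2) (k - int (min_degree V1 E1)) S)"
  using dir1[OF assms] dir2[OF assms] by blast

end
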